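(* Let $X$ have finite second moment and characteristic function $f(t)={\bf E}e^{itX}$ with $$\int_{-\infty}^{+\infty}|t|\big(|f(t)|+|f'(t)|+|f''(t)|\big)\,dt<+\infty.$$ Then $X$ has a continuously differentiable density $p$ with finite total variation $$\|p\|_{TV}=\int|p'(x)|\,dx\le\frac12\int_{-\infty}^{+\infty}\big(|tf''(t)|+2|f'(t)|+|tf(t)|\big)\,dt.$$ *)

theory Defs
  imports "HOL-Probability.Probability"
begin

end

theory Submission
  imports Defs
begin

lemma DC_at:
  fixes r :: "real \<Rightarrow> 'b \<Rightarrow> complex"
  assumes w: "integrable N w" and meas: "\<And>u. r u \<in> borel_measurable N"
    and bound: "\<And>u y. y \<in> space N \<Longrightarrow> norm (r u y) \<le> w y"
    and lim: "\<And>y. y \<in> space N \<Longrightarrow> ((\<lambda>u. r u y) \<longlongrightarrow> 0) (at c)"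
  shows "((\<lambda>u. \<integral>y. norm (r u y) \<partial>N) \<longlongrightarrow> 0) (at c)"
proof (subst tendsto_at_iff_sequentially, intro allI impI)
  fix X :: "nat \<Rightarrow> real" assume X: "\<forall>i. X i \<in> UNIV - {c}" "X \<longlonglongrightarrow> c"
  have Xf: "filterlim X (at c) sequentially"
    using X by (auto simp: filterlim_at)
  have "(\<lambda>i. \<integral>y. norm (r (X i) y) \<partial>N) \<longlonglongrightarrow> (\<integral>y. 0 \<partial>N)"
  proof (rule integral_dominated_convergence[where w=w])
    show "AE y in N. (\<lambda>i. norm (r (X i) y)) \<longlonglongrightarrow> 0"
      using lim by (auto intro!: AE_I2 tendsto_norm_zero filterlim_compose[OF _ Xf])
    show "AE y in N. norm (norm (r (X i) y)) \<le> w y" for i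
      using bound by (auto intro!: AE_I2)
  qed (use w meas in auto)
  then show "((\<lambda>u. \<integral>y. norm (r u y) \<partial>N) \<circ> X) \<longlonglongrightarrow> 0" by (simp add: o_def)
qed

lemma norm_of_real_diff[simp]: "cmod (complex_of_real u - complex_of_real s) = \<bar>u - s\<bar>"
  by (metis norm_of_real of_real_diff)

lemma iexp_bound1: "cmod (iexp v - 1 - \<i> * v) \<le> v^2 / 2"
  using iexp_approx1[of v 1] by (simp add: power2_eq_square algebra_simps)

lemma iexp_bound2: "cmod (iexp v - 1 - \<i> * v) \<le> 2 * \<bar>v\<bar>"
  using iexp_approx2[of v 1] by (simp add: algebra_simps)

lemma iexp_bound0: "cmod (iexp v - 1) \<le> 2"
proof -
  have "cmod (iexp v - 1) \<le> cmod (iexp v) + cmod 1" by (rule norm_triangle_ineq4)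
  then show ?thesis by (simp add: norm_exp_i_times)
qed

lemma cont_param:
  fixes h :: "'b \<Rightarrow> complex" and k :: "'b \<Rightarrow> real"
  assumes h: "integrable N h" and k: "k \<in> borel_measurable N"
  shows "isCont (\<lambda>s. \<integral>y. h y * iexp (s * k y) \<partial>N) s"
proof -
  let ?G = "\<lambda>s. \<integral>y. h y * iexp (s * k y) \<partial>N"
  let ?r = "\<lambda>z y. h y * iexp (s * k y) * (iexp ((z - s) * k y) - 1)"
  have int: "integrable N (\<lambda>y. h y * iexp (z * k y))" for z
    by (rule Bochner_Integration.integrable_bound[OF integrable_norm[OF h]]) (use h k in \<open>auto simp: norm_mult norm_exp_i_times\<close>)
  have eq: "?G z - ?G s = (\<integral>y. ?r z y \<partial>N)" for z
  proof -
    have "?G z - ?G s = (\<integral>y. h y * iexp (z * k y) - h y * iexp (s * k y) \<partial>N)"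
      using int by simp
    also have "\<dots> = (\<integral>y. ?r z y \<partial>N)"
      by (rule Bochner_Integration.integral_cong) (auto simp: algebra_simps exp_add[symmetric])
    finally show ?thesis .
  qed
  have "((\<lambda>z. \<integral>y. norm (?r z y) \<partial>N) \<longlongrightarrow> 0) (at s)"
  proof (rule DC_at[where w="\<lambda>y. 2 * norm (h y)"])
    show "integrable N (\<lambda>y. 2 * cmod (h y))" using h by auto
    show "?r u \<in> borel_measurable N" for u using h k by measurable
    show "norm (?r u y) \<le> 2 * cmod (h y)" for u y
    proof -
      have "norm (?r u y) = cmod (h y) * cmod (iexp ((u - s) * k y) - 1)"
        by (simp add: norm_mult norm_exp_i_times)
      also have "\<dots> \<le> cmod (h y) * 2" by (intro mult_left_mono iexp_bound0) auto
      finally show ?thesis by simp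
    qed
    show "((\<lambda>u. ?r u y) \<longlongrightarrow> 0) (at s)" for y
      by (rule tendsto_eq_intros refl | simp)+
  qed
  then have "((\<lambda>z. ?G z - ?G s) \<longlongrightarrow> 0) (at s)"
    unfolding eq
    by (rule Lim_null_comparison[rotated]) (intro always_eventually allI, rule integral_norm_bound)
  then show ?thesis
    unfolding isCont_def by (simp add: LIM_zero_iff)
qed

lemma deriv_param:
  fixes h :: "'b \<Rightarrow> complex" and k :: "'b \<Rightarrow> real"
  assumes h: "integrable N h" and hk: "integrable N (\<lambda>y. h y * k y)" and k: "k \<in> borel_measurable N"
  shows "((\<lambda>s. \<integral>y. h y * iexp (s * k y) \<partial>N) has_vector_derivative
            (\<integral>y. h y * (\<i> * k y) * iexp (s * k y) \<partial>N)) (at s)"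
proof -
  let ?G = "\<lambda>s. \<integral>y. h y * iexp (s * k y) \<partial>N"
  let ?D = "\<integral>y. h y * (\<i> * k y) * iexp (s * k y) \<partial>N"
  let ?r = "\<lambda>z y. h y * iexp (s * k y) * (iexp ((z - s) * k y) - 1 - \<i> * ((z - s) * k y)) / (z - s)"
  have int: "integrable N (\<lambda>y. h y * iexp (z * k y))" for z
    by (rule Bochner_Integration.integrable_bound[OF integrable_norm[OF h]]) (use h k in \<open>auto simp: norm_mult norm_exp_i_times\<close>)
  have int2: "integrable N (\<lambda>y. h y * (\<i> * k y) * iexp (s * k y))"
    by (rule Bochner_Integration.integrable_bound[OF integrable_norm[OF hk]]) (use h k in \<open>auto simp: norm_mult norm_exp_i_times\<close>)
  have eq: "(?G z - ?G s - (z - s) *\<^sub>R ?D) / (z - s) = (\<integral>y. ?r z y \<partial>N)" for z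
  proof -
    have "?G z - ?G s - (z - s) *\<^sub>R ?D = (\<integral>y. h y * iexp (z * k y) - h y * iexp (s * k y) - (z - s) *\<^sub>R (h y * (\<i> * k y) * iexp (s * k y)) \<partial>N)"
      using int int2 by simp
    also have "\<dots> = (\<integral>y. h y * iexp (s * k y) * (iexp ((z - s) * k y) - 1 - \<i> * ((z - s) * k y)) \<partial>N)"
      by (rule Bochner_Integration.integral_cong) (auto simp: algebra_simps exp_add[symmetric] scaleR_conv_of_real)
    finally show ?thesis by (simp add: integral_divide_zero)
  qed
  have "((\<lambda>z. \<integral>y. norm (?r z y) \<partial>N) \<longlongrightarrow> 0) (at s)"
  proof (rule DC_at[where w="\<lambda>y. 2 * norm (h y * k y)"])
    show "integrable N (\<lambda>y. 2 * cmod (h y * k y))" using hk by auto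
    show "?r u \<in> borel_measurable N" for u using h k by measurable
    show "norm (?r u y) \<le> 2 * cmod (h y * k y)" for u y
    proof (cases "u = s")
      case False
      have "norm (?r u y) = cmod (h y) * cmod (iexp ((u - s) * k y) - 1 - \<i> * ((u - s) * k y)) / \<bar>u - s\<bar>"
        by (simp add: norm_mult norm_divide norm_exp_i_times)
      also have "\<dots> \<le> cmod (h y) * (2 * \<bar>(u - s) * k y\<bar>) / \<bar>u - s\<bar>"
        by (intro divide_right_mono mult_left_mono iexp_bound2) auto
      also have "\<dots> = 2 * cmod (h y * k y)"
        using False by (simp add: abs_mult norm_mult)
      finally show ?thesis .
    qed simp
    show "((\<lambda>u. ?r u y) \<longlongrightarrow> 0) (at s)" for y
    proof -
      have "((\<lambda>u. cmod (h y) * (k y)^2 / 2 * \<bar>u - s\<bar>) \<longlongrightarrow> cmod (h y) * (k y)^2 / 2 * \<bar>s - s\<bar>) (at s)"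
        by (intro tendsto_intros)
      then have lim0: "((\<lambda>u. cmod (h y) * (k y)^2 / 2 * \<bar>u - s\<bar>) \<longlongrightarrow> 0) (at s)" by simp
      have "norm (?r u y) \<le> cmod (h y) * (k y)^2 / 2 * \<bar>u - s\<bar>" for u
      proof (cases "u = s")
        case False
        have "norm (?r u y) = cmod (h y) * cmod (iexp ((u - s) * k y) - 1 - \<i> * ((u - s) * k y)) / \<bar>u - s\<bar>"
          by (simp add: norm_mult norm_divide norm_exp_i_times)
        also have "\<dots> \<le> cmod (h y) * (((u - s) * k y)^2 / 2) / \<bar>u - s\<bar>"
          by (intro divide_right_mono mult_left_mono iexp_bound1) auto
        also have "\<dots> = cmod (h y) * (k y)^2 / 2 * \<bar>u - s\<bar>"
          using False by (simp add: power2_eq_square field_simps abs_mult_self_eq)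
        finally show ?thesis .
      qed simp
      then show ?thesis
        by (intro Lim_null_comparison[OF _ lim0] always_eventually) auto
    qed
  qed
  then have lim: "((\<lambda>z. (?G z - ?G s - (z - s) *\<^sub>R ?D) / (z - s)) \<longlongrightarrow> 0) (at s)"
    unfolding eq
    by (rule Lim_null_comparison[rotated]) (intro always_eventually allI, rule integral_norm_bound)
  show ?thesis
    unfolding has_vector_derivative_def has_derivative_iff_norm
  proof (intro conjI)
    show "bounded_linear (\<lambda>x. x *\<^sub>R ?D)" by (rule bounded_linear_scaleR_left)
    have "((\<lambda>z. norm ((?G z - ?G s - (z - s) *\<^sub>R ?D) / (z - s))) \<longlongrightarrow> 0) (at s)"
      using tendsto_norm_zero[OF lim] .
    then show "((\<lambda>y. norm (?G y - ?G s - (y - s) *\<^sub>R ?D) / norm (y - s)) \<longlongrightarrow> 0) (at s)"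
      by (simp add: norm_divide)
  qed
qed

lemma emeasure_lborel_Ici_infinite: "emeasure lborel {T0::real..} = \<infinity>"
proof (rule ccontr)
  assume "emeasure lborel {T0::real..} \<noteq> \<infinity>"
  then obtain c where c: "emeasure lborel {T0..} = ennreal c" "0 \<le> c"
    by (cases "emeasure lborel {T0::real..}") auto
  have "emeasure lborel {T0..T0 + c + 1} \<le> emeasure lborel {T0..}"
    by (rule emeasure_mono) auto
  then have "ennreal (c + 1) \<le> ennreal c" using c by simp
  then show False using c by (simp add: ennreal_le_iff)
qed

lemma lim_at_top_zero:
  fixes u u' :: "real \<Rightarrow> complex"
  assumes der: "\<And>t. (u has_vector_derivative u' t) (at t)" and cont: "continuous_on UNIV u'"
    and iu: "integrable lborel u" and iu': "integrable lborel u'"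
  shows "(u \<longlongrightarrow> 0) at_top"
proof -
  have FTC: "u T - u 0 = (\<integral>t. indicator {0..T} t *\<^sub>R u' t \<partial>lborel)" if "0 \<le> T" for T
  proof -
    have "(LBINT t=ereal 0..ereal T. u' t) = u T - u 0"
      by (rule interval_integral_FTC_finite) 
         (auto intro: continuous_on_subset[OF cont] has_vector_derivative_at_within der)
    then show ?thesis using that by (simp add: interval_integral_Icc set_lebesgue_integral_def)
  qed
  have meas': "u' \<in> borel_measurable lborel" using iu' by auto
  have lim: "((\<lambda>T. \<integral>t. indicator {0..T} t *\<^sub>R u' t \<partial>lborel) \<longlongrightarrow> (\<integral>t. indicator {0..} t *\<^sub>R u' t \<partial>lborel)) at_top"
  proof (rule integral_dominated_convergence_at_top[where w="\<lambda>t. norm (u' t)"])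
    show "integrable lborel (\<lambda>t. norm (u' t))" using iu' by auto
    show "AE x in lborel. ((\<lambda>i. indicator {0..i} x *\<^sub>R u' x) \<longlongrightarrow> indicator {0..} x *\<^sub>R u' x) at_top"
    proof (rule AE_I2)
      fix x :: real
      have "\<forall>\<^sub>F i in at_top. indicator {0..i} x *\<^sub>R u' x = indicator {0..} x *\<^sub>R u' x"
        using eventually_ge_at_top[of x] by eventually_elim (auto split: split_indicator)
      then show "((\<lambda>i. indicator {0..i} x *\<^sub>R u' x) \<longlongrightarrow> indicator {0..} x *\<^sub>R u' x) at_top"
        by (rule tendsto_eventually)
    qed
    show "\<forall>\<^sub>F i in at_top. AE x in lborel. norm (indicator {0..i} x *\<^sub>R u' x) \<le> norm (u' x)"
      by (auto intro!: always_eventually AE_I2 split: split_indicator)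
  qed (use meas' in auto)
  define L where "L = u 0 + (\<integral>t. indicator {0..} t *\<^sub>R u' t \<partial>lborel)"
  have limu: "(u \<longlongrightarrow> L) at_top"
  proof -
    have "((\<lambda>T. u 0 + (\<integral>t. indicator {0..T} t *\<^sub>R u' t \<partial>lborel)) \<longlongrightarrow> L) at_top"
      unfolding L_def by (intro tendsto_intros lim)
    moreover have "\<forall>\<^sub>F T in at_top. u 0 + (\<integral>t. indicator {0..T} t *\<^sub>R u' t \<partial>lborel) = u T"
      using eventually_ge_at_top[of 0] by eventually_elim (simp add: FTC[symmetric])
    ultimately show ?thesis using Lim_transform_eventually by blast
  qed
  have "L = 0"
  proof (rule ccontr)
    assume L: "L \<noteq> 0"
    then have "\<forall>\<^sub>F T in at_top. dist (u T) L < norm L / 2"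
      using limu L unfolding tendsto_iff by (metis half_gt_zero zero_less_norm_iff)
    then obtain T0 where T0: "\<And>T. T \<ge> T0 \<Longrightarrow> dist (u T) L < norm L / 2"
      by (auto simp: eventually_at_top_linorder)
    have bnd: "norm (indicator {T0..} x * (norm L / 2)) \<le> norm (u x)" for x
    proof (cases "x \<ge> T0")
      case True
      have "norm L \<le> norm (u x) + dist (u x) L"
        by (metis dist_commute dist_norm norm_triangle_sub add.commute)
      with T0[OF True] show ?thesis by (auto simp: indicator_def)
    qed (auto simp: indicator_def)
    have "integrable lborel (\<lambda>x. indicator {T0..} x * (norm L / 2))"
      by (rule Bochner_Integration.integrable_bound[OF integrable_norm[OF iu]]) (use bnd in auto)
    then have "integrable lborel (\<lambda>x. (indicator {T0..} x * (norm L / 2)) * (2 / norm L))"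
      by (rule integrable_mult_left)
    then have "integrable lborel (indicator {T0..} :: real \<Rightarrow> real)"
      using L by simp
    then show False
      by (simp add: integrable_indicator_iff emeasure_lborel_Ici_infinite)
  qed
  with limu show ?thesis by simp
qed

lemma integral_deriv_zero:
  fixes u u' :: "real \<Rightarrow> complex"
  assumes der: "\<And>t. (u has_vector_derivative u' t) (at t)" and cont: "continuous_on UNIV u'"
    and iu: "integrable lborel u" and iu': "integrable lborel u'"
  shows "(\<integral>t. u' t \<partial>lborel) = 0"
proof -
  have top: "(u \<longlongrightarrow> 0) at_top" by (rule lim_at_top_zero[OF der cont iu iu'])
  have bot: "((\<lambda>t. u (- t)) \<longlongrightarrow> 0) at_top"
  proof (rule lim_at_top_zero[where u'="\<lambda>t. - u' (- t)"])
    show "((\<lambda>t. u (- t)) has_vector_derivative - u' (- t)) (at t)" for t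
    proof -
      have "DERIV (\<lambda>x::real. -x) t :> -1" by (auto intro!: derivative_eq_intros)
      then have "((\<lambda>x::real. -x) has_vector_derivative -1) (at t)"
        by (simp add: has_real_derivative_iff_has_vector_derivative)
      from vector_diff_chain_at[OF this der[of "-t"]] show ?thesis
        by (simp add: o_def)
    qed
    show "continuous_on UNIV (\<lambda>t. - u' (- t))"
      by (intro continuous_intros continuous_on_compose2[OF cont]) auto
    show "integrable lborel (\<lambda>t. u (- t))"
      using lborel_integrable_real_affine_iff[of "-1" u 0] iu by simp
    show "integrable lborel (\<lambda>t. - u' (- t))"
      using lborel_integrable_real_affine_iff[of "-1" u' 0] iu' by simp
  qed
  have FTC: "u T - u (-T) = (\<integral>t. indicator {-T..T} t *\<^sub>R u' t \<partial>lborel)" if "0 \<le> T" for T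
  proof -
    have "(LBINT t=ereal (-T)..ereal T. u' t) = u T - u (-T)"
      by (rule interval_integral_FTC_finite) 
         (auto intro: continuous_on_subset[OF cont] has_vector_derivative_at_within der)
    then show ?thesis using that by (simp add: interval_integral_Icc set_lebesgue_integral_def)
  qed
  have meas': "u' \<in> borel_measurable lborel" using iu' by auto
  have lim: "((\<lambda>T. \<integral>t. indicator {-T..T} t *\<^sub>R u' t \<partial>lborel) \<longlongrightarrow> (\<integral>t. u' t \<partial>lborel)) at_top"
  proof (rule integral_dominated_convergence_at_top[where w="\<lambda>t. norm (u' t)"])
    show "integrable lborel (\<lambda>t. norm (u' t))" using iu' by auto
    show "AE x in lborel. ((\<lambda>i. indicator {-i..i} x *\<^sub>R u' x) \<longlongrightarrow> u' x) at_top"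
    proof (rule AE_I2)
      fix x :: real
      have "\<forall>\<^sub>F i in at_top. indicator {-i..i} x *\<^sub>R u' x = u' x"
        using eventually_ge_at_top[of "\<bar>x\<bar>"] by eventually_elim (auto split: split_indicator)
      then show "((\<lambda>i. indicator {-i..i} x *\<^sub>R u' x) \<longlongrightarrow> u' x) at_top"
        by (rule tendsto_eventually)
    qed
    show "\<forall>\<^sub>F i in at_top. AE x in lborel. norm (indicator {-i..i} x *\<^sub>R u' x) \<le> norm (u' x)"
      by (auto intro!: always_eventually AE_I2 split: split_indicator)
  qed (use meas' in auto)
  have "((\<lambda>T. u T - u (-T)) \<longlongrightarrow> 0 - 0) at_top"
    by (intro tendsto_intros top bot)
  moreover have "\<forall>\<^sub>F T in at_top. u T - u (-T) = (\<integral>t. indicator {-T..T} t *\<^sub>R u' t \<partial>lborel)"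
    using eventually_ge_at_top[of 0] by eventually_elim (simp add: FTC)
  ultimately have "((\<lambda>T. \<integral>t. indicator {-T..T} t *\<^sub>R u' t \<partial>lborel) \<longlongrightarrow> 0) at_top"
    by (simp add: Lim_transform_eventually)
  from tendsto_unique[OF _ lim this] show ?thesis by simp
qed

lemma abs_le_1_plus_sq: "\<bar>x::real\<bar> \<le> 1 + x * x"
proof -
  have "0 \<le> (\<bar>x\<bar> - 1) * (\<bar>x\<bar> - 1)" by simp
  then have "0 \<le> \<bar>x\<bar> * \<bar>x\<bar> - 2 * \<bar>x\<bar> + 1" by (simp add: algebra_simps)
  then show ?thesis by (simp add: abs_mult_self_eq)
qed

lemma integrable_from_W:
  fixes F :: "real \<Rightarrow> complex"
  assumes c: "continuous_on UNIV F" and C: "\<And>t. cmod (F t) \<le> C" and W: "integrable lborel W"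
    and FW: "\<And>t. \<bar>t\<bar> * cmod (F t) \<le> W t"
  shows "integrable lborel F" "integrable lborel (\<lambda>t. complex_of_real t * F t)"
proof -
  have mF[measurable]: "F \<in> borel_measurable lborel"
    using c by (simp add: borel_measurable_continuous_onI)
  have ind: "integrable lborel (\<lambda>t. C * indicator {-1..1::real} t)"
    by (intro integrable_mult_right) (simp add: integrable_indicator_iff)
  show "integrable lborel F"
  proof (rule Bochner_Integration.integrable_bound[OF Bochner_Integration.integrable_add[OF ind W]])
    show "AE t in lborel. norm (F t) \<le> norm (C * indicator {-1..1} t + W t)"
    proof (rule AE_I2)
      fix t :: real
      have W0: "0 \<le> W t" using FW[of t] by (smt (verit) mult_nonneg_nonneg abs_ge_zero norm_ge_zero)
      show "norm (F t) \<le> norm (C * indicator {-1..1} t + W t)"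
      proof (cases "\<bar>t\<bar> \<le> 1")
        case True
        then have "t \<in> {-1..1}" by auto
        then show ?thesis using C[of t] W0 by (simp add: indicator_def)
      next
        case False
        have "cmod (F t) \<le> \<bar>t\<bar> * cmod (F t)" using False
          by (simp add: mult_le_cancel_right1)
        then have "cmod (F t) \<le> W t" using FW[of t] by linarith
        moreover have "t \<notin> {-1..1}" using False by auto
        ultimately show ?thesis using W0 by (auto simp: indicator_def)
      qed
    qed
  qed simp
  show "integrable lborel (\<lambda>t. complex_of_real t * F t)"
    by (rule Bochner_Integration.integrable_bound[OF W])
       (auto intro!: AE_I2 simp: norm_mult intro: order_trans[OF FW])
qed

lemma inv_1_sq: "integrable lborel (\<lambda>x::real. inverse (1 + x^2))"
    "(\<integral>x. inverse (1 + x^2) \<partial>lborel) = pi"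
  using integrable_inverse_1_plus_square LBINT_inverse_1_plus_square
  by (simp_all add: set_integrable_def interval_lebesgue_integral_def set_lebesgue_integral_def einterval_def)

lemma dvd_e: "((\<lambda>t. iexp (x * (-t))) has_vector_derivative (\<i> * complex_of_real (-x)) * iexp (x * (-t))) (at t)"
proof -
  have "DERIV (\<lambda>t::real. x * (-t)) t :> -x" by (auto intro!: derivative_eq_intros)
  then have "((\<lambda>t::real. x * (-t)) has_vector_derivative -x) (at t)"
    by (simp add: has_real_derivative_iff_has_vector_derivative)
  from vector_diff_chain_at[OF this has_vector_derivative_iexp]
  show ?thesis by (simp add: o_def scaleR_conv_of_real algebra_simps)
qed

lemma dvd_ofreal: "((\<lambda>t. complex_of_real t) has_vector_derivative 1) (at t)"
  by (auto simp: has_vector_derivative_complex_iff intro!: derivative_eq_intros)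

lemma by_parts_step:
  fixes a a' :: "real \<Rightarrow> complex"
  assumes da: "\<And>t. (a has_vector_derivative a' t) (at t)" and ca': "continuous_on UNIV a'"
    and ca: "continuous_on UNIV a" and ia: "integrable lborel a" and ia': "integrable lborel a'"
  shows "(\<integral>t. a' t * iexp (x * (-t)) \<partial>lborel) = \<i> * x * (\<integral>t. a t * iexp (x * (-t)) \<partial>lborel)"
proof -
  let ?e = "\<lambda>t. iexp (x * (-t))"
  have ma: "a \<in> borel_measurable lborel" using ia by auto
  have ma': "a' \<in> borel_measurable lborel" using ia' by auto
  have i1: "integrable lborel (\<lambda>t. a' t * ?e t)"
    by (rule Bochner_Integration.integrable_bound[OF integrable_norm[OF ia']]) 
       (use ma' in \<open>auto simp: norm_mult norm_exp_i_times\<close>)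
  have i2: "integrable lborel (\<lambda>t. a t * ?e t)"
    by (rule Bochner_Integration.integrable_bound[OF integrable_norm[OF ia]]) 
       (use ma in \<open>auto simp: norm_mult norm_exp_i_times\<close>)
  have i3: "integrable lborel (\<lambda>t. a t * ((\<i> * complex_of_real (-x)) * ?e t))"
    using integrable_mult_right[OF i2, of "\<i> * complex_of_real (-x)"] by (simp add: mult_ac)
  have "(\<integral>t. a' t * ?e t + a t * ((\<i> * complex_of_real (-x)) * ?e t) \<partial>lborel) = 0"
  proof (rule integral_deriv_zero[where u="\<lambda>t. a t * ?e t"])
    show "((\<lambda>t. a t * ?e t) has_vector_derivative a' t * ?e t + a t * ((\<i> * complex_of_real (-x)) * ?e t)) (at t)" for t
      using has_vector_derivative_mult[OF da[of t] dvd_e[of x t]] by (simp add: algebra_simps)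
    show "continuous_on UNIV (\<lambda>t. a' t * ?e t + a t * ((\<i> * complex_of_real (-x)) * ?e t))"
      by (intro continuous_intros ca ca')
    show "integrable lborel (\<lambda>t. a t * ?e t)" by (rule i2)
    show "integrable lborel (\<lambda>t. a' t * ?e t + a t * ((\<i> * complex_of_real (-x)) * ?e t))"
      by (rule Bochner_Integration.integrable_add[OF i1 i3])
  qed
  then have "(\<integral>t. a' t * ?e t \<partial>lborel) + (\<integral>t. a t * ((\<i> * complex_of_real (-x)) * ?e t) \<partial>lborel) = 0"
    using i1 i3 by simp
  moreover have "(\<integral>t. a t * ((\<i> * complex_of_real (-x)) * ?e t) \<partial>lborel) = (\<i> * complex_of_real (-x)) * (\<integral>t. a t * ?e t \<partial>lborel)"
    by (subst integral_mult_right_zero[symmetric]) (simp add: mult_ac)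
  ultimately show ?thesis by (simp add: algebra_simps add_eq_0_iff)
qed

lemma F_integral:
  assumes "t \<noteq> 0" "a \<le> b"
  shows "(iexp (-(t*a)) - iexp (-(t*b))) / (\<i> * t) = (\<integral>x. indicator {a<..b} x *\<^sub>R iexp (x * (-t)) \<partial>lborel)"
proof -
  let ?G = "\<lambda>x. iexp (x * (-t)) / (\<i> * complex_of_real (-t))"
  have d: "(?G has_vector_derivative iexp (x * (-t))) (at x within S)" for x S
  proof -
    have "DERIV (\<lambda>x::real. x * (-t)) x :> -t" by (auto intro!: derivative_eq_intros)
    then have "((\<lambda>x::real. x * (-t)) has_vector_derivative -t) (at x)"
      by (simp add: has_real_derivative_iff_has_vector_derivative)
    from vector_diff_chain_at[OF this has_vector_derivative_iexp]
    have "((\<lambda>x. iexp (x * (-t))) has_vector_derivative (\<i> * complex_of_real (-t)) * iexp (x * (-t))) (at x)"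
      by (simp add: o_def scaleR_conv_of_real algebra_simps)
    from has_vector_derivative_divide[OF this, of "\<i> * complex_of_real (-t)"]
    have "(?G has_vector_derivative iexp (x * (-t))) (at x)"
      using assms(1) by simp
    then show ?thesis by (rule has_vector_derivative_at_within)
  qed
  have "(CLBINT x=a..b. iexp (x * (-t))) = ?G b - ?G a"
    by (rule interval_integral_FTC_finite) (intro continuous_intros, rule d)
  moreover have "(CLBINT x=a..b. iexp (x * (-t))) = (\<integral>x. indicator {a<..b} x *\<^sub>R iexp (x * (-t)) \<partial>lborel)"
    using assms(2) by (simp add: interval_integral_Ioc set_lebesgue_integral_def)
  moreover have "?G b - ?G a = (iexp (-(t*a)) - iexp (-(t*b))) / (\<i> * t)"
    using assms(1) by (simp add: field_simps mult.commute)
  ultimately show ?thesis by simp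
qed

lemma measures_eq_from_Ioc:
  fixes \<mu> \<nu> :: "real measure"
  assumes R: "real_distribution \<mu>" and s\<nu>: "sets \<nu> = sets borel" and D: "countable D"
    and eq: "\<And>a b. a \<le> b \<Longrightarrow> a \<notin> D \<Longrightarrow> b \<notin> D \<Longrightarrow> emeasure \<nu> {a<..b} = emeasure \<mu> {a<..b}"
  shows "\<nu> = \<mu>"
proof -
  interpret R: real_distribution \<mu> by fact
  have ex: "\<exists>x. x \<in> {l<..<u} \<and> x \<notin> D" if "l < u" for l u
    using open_minus_countable[OF D, of "{l<..<u}"] that by auto
  define a where "a n = (SOME x. x \<in> {-real n - 1<..<-real n} \<and> x \<notin> D)" for n :: nat
  have a: "a n \<in> {-real n - 1<..<-real n} \<and> a n \<notin> D" for n
    unfolding a_def by (rule someI_ex[OF ex]) simp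
  define c where "c n = (SOME x. x \<in> {real n<..<real n + 1} \<and> x \<notin> D)" for n :: nat
  have c: "c n \<in> {real n<..<real n + 1} \<and> c n \<notin> D" for n
    unfolding c_def by (rule someI_ex[OF ex]) simp
  have sp: "space \<nu> = UNIV" using sets_eq_imp_space_eq[OF s\<nu>] by simp
  have Iic: "emeasure \<nu> {..b} = emeasure \<mu> {..b}" if b: "b \<notin> D" for b
  proof -
    have inc: "incseq (\<lambda>n. {a n<..b})"
    proof (rule incseq_SucI)
      fix n
      have "a (Suc n) \<le> a n" using a[of n] a[of "Suc n"] by auto
      then show "{a n<..b} \<subseteq> {a (Suc n)<..b}" by auto
    qed
    have un: "(\<Union>n. {a n<..b}) = {..b}"
    proof (intro equalityI subsetI)
      fix x assume "x \<in> {..b}"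
      obtain n :: nat where "- x < real n" using reals_Archimedean2 by blast
      then have "a n < x" using a[of n] by auto
      with \<open>x \<in> {..b}\<close> show "x \<in> (\<Union>n. {a n<..b})" by auto
    qed auto
    have eqn: "emeasure \<nu> {a n<..b} = emeasure \<mu> {a n<..b}" for n
    proof (cases "a n \<le> b")
      case True then show ?thesis using eq[of "a n" b] a[of n] b by blast
    next
      case False then have "{a n<..b} = {}" by auto
      then show ?thesis by simp
    qed
    have r1: "range (\<lambda>n. {a n<..b}) \<subseteq> sets \<nu>" unfolding s\<nu> by (simp add: image_subset_iff)
    have r2: "range (\<lambda>n. {a n<..b}) \<subseteq> sets \<mu>" by (simp add: image_subset_iff)
    have "emeasure \<nu> {..b} = (SUP n. emeasure \<nu> {a n<..b})"
      using SUP_emeasure_incseq[OF r1 inc, unfolded un] by (rule sym)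
    also have "\<dots> = (SUP n. emeasure \<mu> {a n<..b})" unfolding eqn ..
    also have "\<dots> = emeasure \<mu> {..b}"
      using SUP_emeasure_incseq[OF r2 inc, unfolded un] .
    finally show ?thesis .
  qed
  have UN: "emeasure \<nu> UNIV = 1"
  proof -
    have inc: "incseq (\<lambda>n. {..c n})"
    proof (rule incseq_SucI)
      fix n
      have "c n \<le> c (Suc n)" using c[of n] c[of "Suc n"] by auto
      then show "{..c n} \<subseteq> {..c (Suc n)}" by auto
    qed
    have un: "(\<Union>n. {..c n}) = UNIV"
    proof (intro equalityI subsetI)
      fix x :: real
      obtain n :: nat where "x < real n" using reals_Archimedean2 by blast
      then have "x < c n" using c[of n] by auto
      then show "x \<in> (\<Union>n. {..c n})" by (auto intro: less_imp_le)
    qed auto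
    have r1: "range (\<lambda>n. {..c n}) \<subseteq> sets \<nu>" unfolding s\<nu> by (simp add: image_subset_iff)
    have r2: "range (\<lambda>n. {..c n}) \<subseteq> sets \<mu>" by (simp add: image_subset_iff)
    have "emeasure \<nu> UNIV = (SUP n. emeasure \<nu> {..c n})"
      using SUP_emeasure_incseq[OF r1 inc, unfolded un] by (rule sym)
    also have "\<dots> = (SUP n. emeasure \<mu> {..c n})" using Iic c by (metis (no_types, lifting))
    also have "\<dots> = emeasure \<mu> UNIV"
      using SUP_emeasure_incseq[OF r2 inc, unfolded un] .
    also have "\<dots> = 1" using R.emeasure_space_1 by simp
    finally show ?thesis .
  qed
  have Rn: "real_distribution \<nu>"
  proof -
    have "prob_space \<nu>" by (rule prob_spaceI) (simp add: sp UN)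
    then show ?thesis unfolding real_distribution_def real_distribution_axioms_def using s\<nu> by simp
  qed
  interpret Rn: real_distribution \<nu> by fact
  have cdfD: "cdf \<nu> b = cdf \<mu> b" if "b \<notin> D" for b
    unfolding cdf_def2 measure_def using Iic[OF that] by simp
  have "cdf \<nu> = cdf \<mu>"
  proof (rule ext, rule ccontr)
    fix x assume ne: "cdf \<nu> x \<noteq> cdf \<mu> x"
    let ?D = "\<lambda>x. \<bar>cdf \<nu> x - cdf \<mu> x\<bar>"
    have pos: "?D x > 0" using ne by simp
    have "(?D \<longlongrightarrow> ?D x) (at_right x)"
      using Rn.cdf_is_right_cont [of x] R.cdf_is_right_cont [of x]
      by (intro tendsto_intros) (auto simp add: continuous_within)
    then have "eventually (\<lambda>y. \<bar>?D y - ?D x\<bar> < ?D x) (at_right x)"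
      using pos by (simp only: tendsto_iff dist_real_def)
    then obtain N where "N > x" "\<And>y. x < y \<Longrightarrow> y < N \<Longrightarrow> \<bar>?D y - ?D x\<bar> < ?D x"
      by (auto simp add: eventually_at_right[OF less_add_one])
    with ex[OF \<open>N > x\<close>] obtain y where "x < y" "y < N" "y \<notin> D" "\<bar>?D y - ?D x\<bar> < ?D x"
      by auto
    then show False using cdfD[of y] by simp
  qed
  then show ?thesis by (rule cdf_unique[OF Rn R])
qed

theorem proposition5p1:
  fixes M :: "'a measure" and X :: "'a \<Rightarrow> real"
    and f f' f'' :: "real \<Rightarrow> complex"
  assumes "prob_space M"
    and "X \<in> borel_measurable M"
    and "integrable M (\<lambda>\<omega>. (X \<omega>)\<^sup>2)"
    and f_def: "f = char (distr M borel X)"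
    and f'_def: "f' = (\<lambda>t. vector_derivative f (at t))"
    and f''_def: "f'' = (\<lambda>t. vector_derivative f' (at t))"
    and "integrable lborel (\<lambda>t. \<bar>t\<bar> * (cmod (f t) + cmod (f' t) + cmod (f'' t)))"
  shows "\<exists>p :: real \<Rightarrow> real.
           (\<forall>x. 0 \<le> p x) \<and>
           distributed M lborel X (\<lambda>x. ennreal (p x)) \<and>
           (\<forall>x. p differentiable (at x)) \<and> continuous_on UNIV (deriv p) \<and>
           integrable lborel (\<lambda>x. \<bar>deriv p x\<bar>) \<and>
           (\<integral>x. \<bar>deriv p x\<bar> \<partial>lborel)
             \<le> 1/2 * (\<integral>t. (\<bar>t\<bar> * cmod (f'' t) + 2 * cmod (f' t) + \<bar>t\<bar> * cmod (f t)) \<partial>lborel)"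
proof -
  interpret P: prob_space M by fact
  define \<mu> where "\<mu> = distr M borel X"
  interpret R: real_distribution \<mu> unfolding \<mu>_def using assms(2) by simp
  have Xm[measurable]: "X \<in> borel_measurable M" by fact
  have m2: "integrable \<mu> (\<lambda>x. x^2)"
    unfolding \<mu>_def using assms(3) by (subst integrable_distr_eq) auto
  have m1: "integrable \<mu> (\<lambda>x. x)"
    by (rule Bochner_Integration.integrable_bound[where f="\<lambda>x. 1 + x^2"])
       (use m2 in \<open>auto intro!: AE_I2 abs_le_1_plus_sq simp: power2_eq_square\<close>)
  have m1c: "integrable \<mu> (\<lambda>x. (1::complex) * complex_of_real x)"
    using m1 by simp
  have m2c: "integrable \<mu> (\<lambda>x. (\<i> * complex_of_real x) * complex_of_real x)"
  proof -
    have "integrable \<mu> (\<lambda>x. complex_of_real (x * x))"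
      using m2 by (simp add: power2_eq_square del: of_real_mult)
    then have "integrable \<mu> (\<lambda>x. \<i> * complex_of_real (x * x))"
      by (rule integrable_mult_right)
    then show ?thesis by (simp add: mult.assoc)
  qed
  have m1i: "integrable \<mu> (\<lambda>x. \<i> * complex_of_real x)"
    using m1 by simp
  define g1 where "g1 t = (\<integral>x. (\<i> * complex_of_real x) * iexp (t * x) \<partial>\<mu>)" for t
  define g2 where "g2 t = (\<integral>x. (\<i> * complex_of_real x) * (\<i> * complex_of_real x) * iexp (t * x) \<partial>\<mu>)" for t
  have fchar: "f t = (\<integral>x. 1 * iexp (t * x) \<partial>\<mu>)" for t
    by (simp add: f_def \<mu>_def char_def)
  have df: "(f has_vector_derivative g1 t) (at t)" for t
    using deriv_param[where N=\<mu> and h="\<lambda>_. 1" and k="\<lambda>x. x" and s=t] m1c unfolding fchar[abs_def] g1_def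
    by (simp add: mult.assoc)
  have dg1: "(g1 has_vector_derivative g2 t) (at t)" for t
    using deriv_param[where N=\<mu> and h="\<lambda>x. \<i> * complex_of_real x" and k="\<lambda>x. x" and s=t] m1i m2c
    unfolding g1_def g2_def by simp
  have f'_eq: "f' = g1" unfolding f'_def using df by (intro ext vector_derivative_at)
  have f''_eq: "f'' = g2" unfolding f''_def f'_eq using dg1 by (intro ext vector_derivative_at)
  have cont_f: "continuous_on UNIV f"
    unfolding fchar by (intro continuous_at_imp_continuous_on ballI cont_param) auto
  have cont_g1: "continuous_on UNIV g1"
    unfolding g1_def by (intro continuous_at_imp_continuous_on ballI cont_param m1i) auto
  have m2n: "integrable \<mu> (\<lambda>x. (\<i> * complex_of_real x) * (\<i> * complex_of_real x))"
  proof -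
    have "integrable \<mu> (\<lambda>x. \<i> * ((\<i> * complex_of_real x) * complex_of_real x))"
      by (rule integrable_mult_right[OF m2c])
    moreover have "(\<lambda>x. \<i> * ((\<i> * complex_of_real x) * complex_of_real x)) = (\<lambda>x. (\<i> * complex_of_real x) * (\<i> * complex_of_real x))"
      by (auto simp: algebra_simps)
    ultimately show ?thesis by simp
  qed
  have cont_g2: "continuous_on UNIV g2"
    unfolding g2_def using m2n
    by (intro continuous_at_imp_continuous_on ballI cont_param) auto
  define m1' where "m1' = (\<integral>x. \<bar>x\<bar> \<partial>\<mu>)"
  define m2' where "m2' = (\<integral>x. x^2 \<partial>\<mu>)"
  have bf: "cmod (f t) \<le> 1" for t
    unfolding f_def \<mu>_def[symmetric] by (rule R.cmod_char_le_1)
  have bg1: "cmod (g1 t) \<le> m1'" for t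
  proof -
    have "cmod (g1 t) \<le> (\<integral>x. cmod ((\<i> * complex_of_real x) * iexp (t * x)) \<partial>\<mu>)"
      unfolding g1_def by (rule integral_norm_bound)
    also have "\<dots> = m1'" unfolding m1'_def by (simp add: norm_mult norm_exp_i_times)
    finally show ?thesis .
  qed
  have bg2: "cmod (g2 t) \<le> m2'" for t
  proof -
    have "cmod (g2 t) \<le> (\<integral>x. cmod ((\<i> * complex_of_real x) * (\<i> * complex_of_real x) * iexp (t * x)) \<partial>\<mu>)"
      unfolding g2_def by (rule integral_norm_bound)
    also have "\<dots> = m2'" unfolding m2'_def by (simp add: norm_mult norm_exp_i_times power2_eq_square)
    finally show ?thesis .
  qed
  have Wm: "integrable lborel (\<lambda>t. \<bar>t\<bar> * (cmod (f t) + cmod (g1 t) + cmod (g2 t)))"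
    using assms(7) unfolding f'_eq f''_eq .
  have iW1: "\<bar>t\<bar> * cmod (f t) \<le> \<bar>t\<bar> * (cmod (f t) + cmod (g1 t) + cmod (g2 t))" for t
    by (intro mult_left_mono) auto
  have iW2: "\<bar>t\<bar> * cmod (g1 t) \<le> \<bar>t\<bar> * (cmod (f t) + cmod (g1 t) + cmod (g2 t))" for t
    by (intro mult_left_mono) auto
  have iW3: "\<bar>t\<bar> * cmod (g2 t) \<le> \<bar>t\<bar> * (cmod (f t) + cmod (g1 t) + cmod (g2 t))" for t
    by (intro mult_left_mono) auto
  note i_f = integrable_from_W[OF cont_f bf Wm iW1]
  note i_g1 = integrable_from_W[OF cont_g1 bg1 Wm iW2]
  note i_g2 = integrable_from_W[OF cont_g2 bg2 Wm iW3]
  have mf[measurable]: "f \<in> borel_measurable lborel" using i_f(1) by auto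
  have mg1[measurable]: "g1 \<in> borel_measurable lborel" using i_g1(1) by auto
  have mg2[measurable]: "g2 \<in> borel_measurable lborel" using i_g2(1) by auto
  define pt where "pt x = (\<integral>t. f t * iexp (x * (-t)) \<partial>lborel)" for x
  define pd where "pd x = (\<integral>t. (f t * (\<i> * complex_of_real (-t))) * iexp (x * (-t)) \<partial>lborel)" for x
  define p where "p x = Re (pt x) / (2 * pi)" for x
  define p' where "p' x = Re (pd x) / (2 * pi)" for x
  have ifk: "integrable lborel (\<lambda>t. f t * complex_of_real (-t))"
    using integrable_mult_right[OF i_f(2), of "-1"] by (simp add: mult_ac)
  have ifk2: "integrable lborel (\<lambda>t. f t * (\<i> * complex_of_real (-t)))"
    using integrable_mult_right[OF ifk, of "\<i>"] by (simp add: mult_ac)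
  have dpt: "(pt has_vector_derivative pd x) (at x)" for x
    unfolding pt_def[abs_def] pd_def
    using deriv_param[where N=lborel and h=f and k="\<lambda>t. -t" and s=x] i_f(1) ifk by simp
  have dp: "(p has_real_derivative p' x) (at x)" for x
    unfolding p_def[abs_def] p'_def
    using DERIV_cdivide[OF has_field_derivative_Re[OF dpt[of x]], of "2 * pi"] by simp
  have cpd: "continuous_on UNIV pd"
    unfolding pd_def[abs_def]
    by (intro continuous_at_imp_continuous_on ballI cont_param ifk2) auto
  have cp': "continuous_on UNIV p'"
    unfolding p'_def[abs_def] by (intro continuous_intros cpd) auto
  have deriv_p: "deriv p = p'"
    using dp by (intro ext DERIV_imp_deriv)
  define A0 where "A0 = (\<integral>t. \<bar>t\<bar> * cmod (f t) \<partial>lborel)"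
  define B0 where "B0 = (\<integral>t. 2 * cmod (g1 t) + \<bar>t\<bar> * cmod (g2 t) \<partial>lborel)"
  have iA0: "integrable lborel (\<lambda>t. \<bar>t\<bar> * cmod (f t))"
    using integrable_norm[OF i_f(2)] by (simp add: norm_mult)
  have iB1: "integrable lborel (\<lambda>t. \<bar>t\<bar> * cmod (g2 t))"
    using integrable_norm[OF i_g2(2)] by (simp add: norm_mult)
  have iB2: "integrable lborel (\<lambda>t. cmod (g1 t))"
    using integrable_norm[OF i_g1(1)] by simp
  have bound: "(1 + x^2) * \<bar>p' x\<bar> \<le> (A0 + B0) / (2 * pi)" for x
  proof -
    let ?e = "\<lambda>t. iexp (x * (-t))"
    define q where "q t = complex_of_real t * f t" for t
    define q1 where "q1 t = f t + complex_of_real t * g1 t" for t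
    define q2 where "q2 t = 2 * g1 t + complex_of_real t * g2 t" for t
    have dq: "(q has_vector_derivative q1 t) (at t)" for t
      unfolding q_def[abs_def] q1_def
      using has_vector_derivative_mult[OF dvd_ofreal df[of t]]
      by (simp add: algebra_simps)
    have dq1: "(q1 has_vector_derivative q2 t) (at t)" for t
      unfolding q1_def[abs_def] q2_def
      using has_vector_derivative_add[OF df[of t] has_vector_derivative_mult[OF dvd_ofreal dg1[of t]]]
      by (simp add: algebra_simps)
    have cq: "continuous_on UNIV q" unfolding q_def[abs_def] by (intro continuous_intros cont_f)
    have cq1: "continuous_on UNIV q1" unfolding q1_def[abs_def] by (intro continuous_intros cont_f cont_g1)
    have cq2: "continuous_on UNIV q2" unfolding q2_def[abs_def] by (intro continuous_intros cont_g2 cont_g1)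
    have iq: "integrable lborel q" unfolding q_def[abs_def] by (rule i_f(2))
    have iq1: "integrable lborel q1" unfolding q1_def[abs_def] 
      by (rule Bochner_Integration.integrable_add[OF i_f(1) i_g1(2)])
    have iq2: "integrable lborel q2" unfolding q2_def[abs_def] 
      by (rule Bochner_Integration.integrable_add[OF integrable_mult_right[OF i_g1(1)] i_g2(2)])
    have s1: "(\<integral>t. q1 t * ?e t \<partial>lborel) = \<i> * x * (\<integral>t. q t * ?e t \<partial>lborel)"
      by (rule by_parts_step[OF dq cq1 cq iq iq1])
    have s2: "(\<integral>t. q2 t * ?e t \<partial>lborel) = \<i> * x * (\<integral>t. q1 t * ?e t \<partial>lborel)"
      by (rule by_parts_step[OF dq1 cq2 cq1 iq1 iq2])
    have pdq: "pd x = - \<i> * (\<integral>t. q t * ?e t \<partial>lborel)"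
    proof -
      have "pd x = (\<integral>t. - \<i> * (q t * ?e t) \<partial>lborel)"
        unfolding pd_def q_def by (rule Bochner_Integration.integral_cong) (auto simp: algebra_simps)
      then show ?thesis by simp
    qed
    have n0: "cmod (\<integral>t. q t * ?e t \<partial>lborel) \<le> A0"
    proof -
      have "cmod (\<integral>t. q t * ?e t \<partial>lborel) \<le> (\<integral>t. cmod (q t * ?e t) \<partial>lborel)"
        by (rule integral_norm_bound)
      also have "\<dots> = A0" unfolding A0_def q_def by (simp add: norm_mult norm_exp_i_times)
      finally show ?thesis .
    qed
    have n2: "x^2 * cmod (\<integral>t. q t * ?e t \<partial>lborel) \<le> B0"
    proof -
      have "x^2 * cmod (\<integral>t. q t * ?e t \<partial>lborel) = cmod (\<integral>t. q2 t * ?e t \<partial>lborel)"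
        unfolding s2 s1 by (simp add: norm_mult power2_eq_square abs_mult_self_eq)
      also have "\<dots> \<le> (\<integral>t. cmod (q2 t * ?e t) \<partial>lborel)"
        by (rule integral_norm_bound)
      also have "\<dots> \<le> B0" unfolding B0_def
      proof (rule integral_mono)
        show "integrable lborel (\<lambda>t. cmod (q2 t * ?e t))"
          using integrable_norm[OF iq2] by (simp add: norm_mult norm_exp_i_times)
        show "integrable lborel (\<lambda>t. 2 * cmod (g1 t) + \<bar>t\<bar> * cmod (g2 t))"
          using iB1 iB2 by simp
        show "cmod (q2 t * ?e t) \<le> 2 * cmod (g1 t) + \<bar>t\<bar> * cmod (g2 t)" for t
          unfolding q2_def norm_mult norm_exp_i_times
          using norm_triangle_ineq[of "2 * g1 t" "complex_of_real t * g2 t"]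
          by (simp add: norm_mult)
      qed
      finally show ?thesis .
    qed
    have np: "\<bar>p' x\<bar> \<le> cmod (\<integral>t. q t * ?e t \<partial>lborel) / (2 * pi)"
    proof -
      have "\<bar>p' x\<bar> = \<bar>Re (pd x)\<bar> / (2 * pi)" unfolding p'_def by simp
      also have "\<dots> \<le> cmod (pd x) / (2 * pi)"
        by (intro divide_right_mono abs_Re_le_cmod) simp
      also have "cmod (pd x) = cmod (\<integral>t. q t * ?e t \<partial>lborel)"
        unfolding pdq by (simp add: norm_mult)
      finally show ?thesis .
    qed
    have "(1 + x^2) * \<bar>p' x\<bar> \<le> (1 + x^2) * (cmod (\<integral>t. q t * ?e t \<partial>lborel) / (2 * pi))"
      by (intro mult_left_mono np) simp
    also have "\<dots> = (cmod (\<integral>t. q t * ?e t \<partial>lborel) + x^2 * cmod (\<integral>t. q t * ?e t \<partial>lborel)) / (2 * pi)"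
      by (simp add: field_simps)
    also have "\<dots> \<le> (A0 + B0) / (2 * pi)"
      by (intro divide_right_mono add_mono n0 n2) simp
    finally show ?thesis .
  qed
  define C where "C = (A0 + B0) / (2 * pi)"
  have bound': "\<bar>p' x\<bar> \<le> C * inverse (1 + x^2)" for x
  proof -
    have pos: "0 < 1 + x^2" by (simp add: add_pos_nonneg)
    have "\<bar>p' x\<bar> \<le> C / (1 + x^2)"
      using bound[of x] unfolding C_def by (subst pos_le_divide_eq[OF pos]) (simp add: mult.commute)
    then show ?thesis by (simp add: divide_inverse)
  qed
  have mp'[measurable]: "p' \<in> borel_measurable lborel"
    using cp' by (simp add: borel_measurable_continuous_onI)
  have iC: "integrable lborel (\<lambda>x. C * inverse (1 + x^2))"
    by (intro integrable_mult_right inv_1_sq)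
  have ip': "integrable lborel (\<lambda>x. \<bar>p' x\<bar>)"
    by (rule Bochner_Integration.integrable_bound[OF iC]) (auto intro!: AE_I2 order_trans[OF bound'])
  have TV: "(\<integral>x. \<bar>p' x\<bar> \<partial>lborel) \<le> (A0 + B0) / 2"
  proof -
    have "(\<integral>x. \<bar>p' x\<bar> \<partial>lborel) \<le> (\<integral>x. C * inverse (1 + x^2) \<partial>lborel)"
      by (intro integral_mono ip' iC bound')
    also have "\<dots> = C * pi" using inv_1_sq(2) by simp
    also have "\<dots> = (A0 + B0) / 2" unfolding C_def by simp
    finally show ?thesis .
  qed
  have RHS: "(\<integral>t. (\<bar>t\<bar> * cmod (f'' t) + 2 * cmod (f' t) + \<bar>t\<bar> * cmod (f t)) \<partial>lborel) = A0 + B0"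
  proof -
    have "(\<integral>t. (\<bar>t\<bar> * cmod (f'' t) + 2 * cmod (f' t) + \<bar>t\<bar> * cmod (f t)) \<partial>lborel)
        = (\<integral>t. (2 * cmod (g1 t) + \<bar>t\<bar> * cmod (g2 t)) + \<bar>t\<bar> * cmod (f t) \<partial>lborel)"
      unfolding f'_eq f''_eq by (rule Bochner_Integration.integral_cong) auto
    also have "\<dots> = B0 + A0" unfolding A0_def B0_def
      using iA0 iB1 iB2 by (subst Bochner_Integration.integral_add) auto
    finally show ?thesis by simp
  qed
  have fmu: "f = char \<mu>" by (simp add: f_def \<mu>_def)
  have cpt: "continuous_on UNIV pt"
    unfolding pt_def[abs_def] by (intro continuous_at_imp_continuous_on ballI cont_param i_f(1)) auto
  have mpt[measurable]: "pt \<in> borel_measurable lborel"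
    using cpt by (simp add: borel_measurable_continuous_onI)
  define K where "K = (\<integral>t. cmod (f t) \<partial>lborel)"
  have bpt: "cmod (pt x) \<le> K" for x
  proof -
    have "cmod (pt x) \<le> (\<integral>t. cmod (f t * iexp (x * (-t))) \<partial>lborel)"
      unfolding pt_def by (rule integral_norm_bound)
    also have "\<dots> = K" unfolding K_def by (simp add: norm_mult norm_exp_i_times)
    finally show ?thesis .
  qed
  have INV: "measure \<mu> {a<..b} = (\<integral>x. indicator {a<..b} x * p x \<partial>lborel)"
    if ab: "a \<le> b" "measure \<mu> {a} = 0" "measure \<mu> {b} = 0" for a b
  proof -
    define F where "F t = (iexp (-(t*a)) - iexp (-(t*b))) / (\<i> * complex_of_real t)" for t
    have FI: "F t = (\<integral>x. indicator {a<..b} x *\<^sub>R iexp (x * (-t)) \<partial>lborel)" if "t \<noteq> 0" for t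
      unfolding F_def by (rule F_integral) (use ab that in auto)
    have Fb: "cmod (F t) \<le> b - a" for t
    proof (cases "t = 0")
      case True then show ?thesis using ab by (simp add: F_def)
    next
      case False
      have "cmod (F t) \<le> (\<integral>x. norm (indicator {a<..b} x *\<^sub>R iexp (x * (-t))) \<partial>lborel)"
        unfolding FI[OF False] by (rule integral_norm_bound)
      also have "\<dots> = (\<integral>x. indicator {a<..b} x \<partial>lborel)"
        by (rule Bochner_Integration.integral_cong) (auto simp: norm_exp_i_times indicator_def)
      also have "\<dots> = b - a" using ab by simp
      finally show ?thesis .
    qed
    have mF[measurable]: "F \<in> borel_measurable lborel" unfolding F_def[abs_def] by measurable
    have lev: "(\<lambda>T::nat. complex_of_real (1 / (2 * pi)) *
        (CLBINT t=ereal (real_of_int (- int T))..ereal (real T). F t * f t))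
        \<longlonglongrightarrow> complex_of_real (measure \<mu> {a<..b})"
      using R.Levy_Inversion[OF ab] unfolding F_def fmu .
    have eqT: "(CLBINT t=ereal (real_of_int (- int T))..ereal (real T). F t * f t)
        = (\<integral>t. indicator {- real T<..<real T} t *\<^sub>R (F t * f t) \<partial>lborel)" for T :: nat
      by (simp add: interval_lebesgue_integral_def set_lebesgue_integral_def)
    have dc: "(\<lambda>T::nat. \<integral>t. indicator {- real T<..<real T} t *\<^sub>R (F t * f t) \<partial>lborel)
        \<longlonglongrightarrow> (\<integral>t. F t * f t \<partial>lborel)"
    proof (rule integral_dominated_convergence[where w="\<lambda>t. (b - a) * cmod (f t)"])
      show "integrable lborel (\<lambda>t. (b - a) * cmod (f t))"
        using integrable_norm[OF i_f(1)] by simp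
      show "AE t in lborel. (\<lambda>T. indicator {- real T<..<real T} t *\<^sub>R (F t * f t)) \<longlonglongrightarrow> F t * f t"
      proof (rule AE_I2)
        fix t :: real
        obtain N :: nat where N: "\<bar>t\<bar> < real N" using reals_Archimedean2 by blast
        have "\<forall>\<^sub>F T in sequentially. indicator {- real T<..<real T} t *\<^sub>R (F t * f t) = F t * f t"
          unfolding eventually_sequentially
          by (rule exI[of _ N]) (use N in \<open>auto simp: indicator_def\<close>)
        then show "(\<lambda>T. indicator {- real T<..<real T} t *\<^sub>R (F t * f t)) \<longlonglongrightarrow> F t * f t"
          by (rule tendsto_eventually)
      qed
      show "AE t in lborel. norm (indicator {- real T<..<real T} t *\<^sub>R (F t * f t)) \<le> (b - a) * cmod (f t)" for T :: nat
        using ab(1) by (intro AE_I2) (auto simp: indicator_def norm_mult intro!: mult_right_mono Fb)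
    qed simp_all
    have "complex_of_real (measure \<mu> {a<..b}) = complex_of_real (1 / (2 * pi)) * (\<integral>t. F t * f t \<partial>lborel)"
      using LIMSEQ_unique[OF lev[unfolded eqT] tendsto_mult[OF tendsto_const dc]] .
    moreover have "(\<integral>t. F t * f t \<partial>lborel) = (\<integral>x. indicator {a<..b} x *\<^sub>R pt x \<partial>lborel)"
    proof -
      have "(\<integral>t. F t * f t \<partial>lborel) = (\<integral>t. \<integral>x. indicator {a<..b} x *\<^sub>R (f t * iexp (x * (-t))) \<partial>lborel \<partial>lborel)"
      proof (rule integral_cong_AE)
        show "AE t in lborel. F t * f t = (\<integral>x. indicator {a<..b} x *\<^sub>R (f t * iexp (x * (-t))) \<partial>lborel)"
          using AE_lborel_singleton[of 0]
        proof eventually_elim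
          case (elim t)
          have "F t * f t = (\<integral>x. (indicator {a<..b} x *\<^sub>R iexp (x * (-t))) * f t \<partial>lborel)"
            unfolding FI[OF elim] by (rule integral_mult_left_zero[symmetric])
          also have "\<dots> = (\<integral>x. indicator {a<..b} x *\<^sub>R (f t * iexp (x * (-t))) \<partial>lborel)"
            by (rule Bochner_Integration.integral_cong) (auto simp: scaleR_conv_of_real mult_ac)
          finally show ?case .
        qed
      qed measurable
      also have "\<dots> = (\<integral>x. \<integral>t. indicator {a<..b} x *\<^sub>R (f t * iexp (x * (-t))) \<partial>lborel \<partial>lborel)"
      proof (rule lborel_pair.Fubini_integral)
        show "integrable (lborel \<Otimes>\<^sub>M lborel) (\<lambda>(x, t). indicator {a<..b} x *\<^sub>R (f t * iexp (x * (-t))))"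
        proof (rule lborel_pair.Fubini_integrable)
          show "(\<lambda>(x, t). indicator {a<..b} x *\<^sub>R (f t * iexp (x * (-t)))) \<in> borel_measurable (lborel \<Otimes>\<^sub>M lborel)"
            by measurable
          have ii: "integrable lborel (\<lambda>x. indicator {a<..b} x * K)"
            using ab by (intro integrable_mult_left) (simp add: integrable_indicator_iff)
          have eqn: "(\<lambda>x. \<integral>t. norm (case (x, t) of (x, t) \<Rightarrow> indicator {a<..b} x *\<^sub>R (f t * iexp (x * (-t)))) \<partial>lborel) = (\<lambda>x. indicator {a<..b} x * K)"
            by (rule ext) (auto simp: K_def indicator_def norm_mult norm_exp_i_times)
          show "integrable lborel (\<lambda>x. \<integral>t. norm (case (x, t) of (x, t) \<Rightarrow> indicator {a<..b} x *\<^sub>R (f t * iexp (x * (-t)))) \<partial>lborel)"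
            unfolding eqn by (rule ii)
          show "AE x in lborel. integrable lborel (\<lambda>t. case (x, t) of (x, t) \<Rightarrow> indicator {a<..b} x *\<^sub>R (f t * iexp (x * (-t))))"
          proof (rule AE_I2)
            fix x :: real
            have "integrable lborel (\<lambda>t. f t * iexp (x * (-t)))"
              by (rule Bochner_Integration.integrable_bound[OF integrable_norm[OF i_f(1)]]) 
                 (auto simp: norm_mult norm_exp_i_times)
            then show "integrable lborel (\<lambda>t. case (x, t) of (x, t) \<Rightarrow> indicator {a<..b} x *\<^sub>R (f t * iexp (x * (-t))))"
              by simp
          qed
        qed
      qed
      also have "\<dots> = (\<integral>x. indicator {a<..b} x *\<^sub>R pt x \<partial>lborel)"
        unfolding pt_def by simp
      finally show ?thesis .
    qed
    ultimately have eqc: "complex_of_real (measure \<mu> {a<..b}) = complex_of_real (1 / (2 * pi)) * (\<integral>x. indicator {a<..b} x *\<^sub>R pt x \<partial>lborel)"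
      by simp
    have ipt: "integrable lborel (\<lambda>x. indicator {a<..b} x *\<^sub>R pt x)"
    proof (rule Bochner_Integration.integrable_bound)
      show "integrable lborel (\<lambda>x. indicator {a<..b} x * K)"
        using ab by (intro integrable_mult_left) (simp add: integrable_indicator_iff)
      show "AE x in lborel. norm (indicator {a<..b} x *\<^sub>R pt x) \<le> norm (indicator {a<..b} x * K)"
        using bpt by (auto intro!: AE_I2 simp: indicator_def intro: order_trans[OF _ abs_ge_self])
    qed simp
    have "measure \<mu> {a<..b} = Re (complex_of_real (1 / (2 * pi)) * (\<integral>x. indicator {a<..b} x *\<^sub>R pt x \<partial>lborel))"
      using arg_cong[OF eqc, of Re] by simp
    also have "\<dots> = 1 / (2 * pi) * (\<integral>x. Re (indicator {a<..b} x *\<^sub>R pt x) \<partial>lborel)"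
      using integral_Re[OF ipt] by simp
    also have "\<dots> = (\<integral>x. indicator {a<..b} x * p x \<partial>lborel)"
      unfolding p_def by (simp add: indicator_def)
    finally show ?thesis .
  qed
  have cp: "continuous_on UNIV p"
    unfolding p_def[abs_def] by (intro continuous_intros cpt) auto
  have mp[measurable]: "p \<in> borel_measurable lborel"
    using cp by (simp add: borel_measurable_continuous_onI)
  have K0: "0 \<le> K" unfolding K_def by (rule Bochner_Integration.integral_nonneg) simp
  have pb: "\<bar>p x\<bar> \<le> K / (2 * pi)" for x
  proof -
    have "\<bar>p x\<bar> = \<bar>Re (pt x)\<bar> / (2 * pi)" unfolding p_def by simp
    also have "\<dots> \<le> K / (2 * pi)"
      by (intro divide_right_mono order_trans[OF abs_Re_le_cmod bpt]) simp
    finally show ?thesis .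
  qed
  have ipi: "integrable lborel (\<lambda>x. indicator {a<..b} x * p x)" if "a \<le> b" for a b
  proof (rule Bochner_Integration.integrable_bound)
    show "integrable lborel (\<lambda>x. indicator {a<..b} x * (K / (2 * pi)))"
      using that by (intro integrable_mult_left) (simp add: integrable_indicator_iff)
    show "AE x in lborel. norm (indicator {a<..b} x * p x) \<le> norm (indicator {a<..b} x * (K / (2 * pi)))"
      using pb K0 by (auto intro!: AE_I2 simp: indicator_def)
  qed simp
  define D where "D = {x. measure \<mu> {x} \<noteq> 0}"
  have cD: "countable D" unfolding D_def by (rule R.countable_support)
  have exD: "\<exists>x. x \<in> {l<..<u} \<and> x \<notin> D" if "l < u" for l u
    using open_minus_countable[OF cD, of "{l<..<u}"] that by auto
  have INV': "measure \<mu> {a<..b} = (\<integral>x. indicator {a<..b} x * p x \<partial>lborel)"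
    if "a \<le> b" "a \<notin> D" "b \<notin> D" for a b
    using INV[of a b] that by (simp add: D_def)
  have main_nonneg: "\<forall>x. 0 \<le> p x"
  proof (rule allI, rule ccontr)
    fix x0 assume "\<not> 0 \<le> p x0"
    then have neg: "p x0 < 0" by simp
    then have "- p x0 / 2 > 0" by simp
    with cp obtain d where d: "d > 0" "\<And>y. dist y x0 < d \<Longrightarrow> dist (p y) (p x0) < - p x0 / 2"
      unfolding continuous_on_iff by (metis UNIV_I)
    obtain a where a: "a \<in> {x0 - d<..<x0}" "a \<notin> D" using exD[of "x0 - d" x0] d by auto
    obtain b where b: "b \<in> {x0<..<x0 + d}" "b \<notin> D" using exD[of x0 "x0 + d"] d by auto
    have ab: "a \<le> b" using a b by auto
    have "measure \<mu> {a<..b} = (\<integral>x. indicator {a<..b} x * p x \<partial>lborel)"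
      by (rule INV'[OF ab a(2) b(2)])
    also have "\<dots> \<le> (\<integral>x. indicator {a<..b} x * (p x0 / 2) \<partial>lborel)"
    proof (rule integral_mono[OF ipi[OF ab]])
      show "integrable lborel (\<lambda>x. indicator {a<..b} x * (p x0 / 2))"
        using ab by (intro integrable_mult_left) (simp add: integrable_indicator_iff)
      fix y
      show "indicator {a<..b} y * p y \<le> indicator {a<..b} y * (p x0 / 2)"
      proof (cases "y \<in> {a<..b}")
        case True
        then have "dist y x0 < d" using a b by (auto simp: dist_real_def)
        from d(2)[OF this] have "p y < p x0 / 2" by (auto simp: dist_real_def)
        then show ?thesis using True by simp
      qed simp
    qed
    also have "\<dots> = (b - a) * (p x0 / 2)" using ab by simp
    also have "\<dots> < 0" using a b neg by (intro mult_pos_neg) auto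
    finally show False by simp
  qed
  define \<nu> where "\<nu> = density lborel (\<lambda>x. ennreal (p x))"
  have s\<nu>: "sets \<nu> = sets borel" unfolding \<nu>_def by simp
  have \<nu>\<mu>: "\<nu> = \<mu>"
  proof (rule measures_eq_from_Ioc[OF _ s\<nu> cD])
    show "real_distribution \<mu>" by unfold_locales
    fix a b assume ab: "a \<le> b" "a \<notin> D" "b \<notin> D"
    have "emeasure \<nu> {a<..b} = (\<integral>\<^sup>+x. ennreal (p x) * indicator {a<..b} x \<partial>lborel)"
      unfolding \<nu>_def by (rule emeasure_density) auto
    also have "\<dots> = (\<integral>\<^sup>+x. ennreal (indicator {a<..b} x * p x) \<partial>lborel)"
      by (rule nn_integral_cong) (auto simp: indicator_def)
    also have "\<dots> = ennreal (\<integral>x. indicator {a<..b} x * p x \<partial>lborel)"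
      by (rule nn_integral_eq_integral[OF ipi[OF ab(1)]]) (use main_nonneg in \<open>auto intro!: AE_I2\<close>)
    also have "\<dots> = ennreal (measure \<mu> {a<..b})" using INV'[OF ab] by simp
    also have "\<dots> = emeasure \<mu> {a<..b}" by (simp add: R.emeasure_eq_measure)
    finally show "emeasure \<nu> {a<..b} = emeasure \<mu> {a<..b}" .
  qed
  have main_distr: "distributed M lborel X (\<lambda>x. ennreal (p x))"
    unfolding distributed_def
  proof (intro conjI)
    have "distr M lborel X = distr M borel X" by (rule distr_cong) auto
    then show "distr M lborel X = density lborel (\<lambda>x. ennreal (p x))"
      using \<nu>\<mu> unfolding \<nu>_def \<mu>_def by simp
    show "(\<lambda>x. ennreal (p x)) \<in> borel_measurable lborel" by measurable
    show "X \<in> measurable M lborel" by simp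
  qed
  show ?thesis
  proof (intro exI[of _ p] conjI main_nonneg main_distr allI)
    show "p differentiable (at x)" for x using dp[of x] real_differentiable_def by blast
    show "continuous_on UNIV (deriv p)" unfolding deriv_p by (rule cp')
    show "integrable lborel (\<lambda>x. \<bar>deriv p x\<bar>)" unfolding deriv_p by (rule ip')
    show "(\<integral>x. \<bar>deriv p x\<bar> \<partial>lborel)
             \<le> 1/2 * (\<integral>t. (\<bar>t\<bar> * cmod (f'' t) + 2 * cmod (f' t) + \<bar>t\<bar> * cmod (f t)) \<partial>lborel)"
      unfolding deriv_p RHS using TV by simp
  qed
qed

end
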